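(* Let $X$ be an infinite compact metrizable space and $h\colon X\to X$ a minimal homeomorphism. If $F\subset X$ is a thin closed set, then $F$ is universally null.
   Context: $M_h(X)$ denotes the set of $h$-invariant Borel probability measures on $X$; a Borel set is universally null if it has measure $0$ for all $\mu\in M_h(X)$. For $F\subset X$ closed and $U\subset X$ open, write $F\prec U$ if there exist $M\in\mathbb{N}$, open sets $U_0,\dots,U_M\subset X$ and integers $d(0),\dots,d(M)$ such that $F\subset\bigcup_{j=0}^M U_j$, $h^{d(j)}(U_j)\subset U$ for all $j$, and the sets $h^{d(j)}(U_j)$ are pairwise disjoint. A closed set $F$ is thin if $F\prec U$ for every non-empty open $U\subset X$. *)

theory Defs
  imports "HOL-Probability.Probability"
begin

text \<open>The space X is the whole (compact, metrizable) type 'a. Integer powers of a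
bijection h: h^n for n >= 0, (h^-1)^(-n) for n < 0.\<close>

definition hpow :: "('a \<Rightarrow> 'a) \<Rightarrow> int \<Rightarrow> 'a \<Rightarrow> 'a" where
  "hpow h n = (if 0 \<le> n then h ^^ nat n else inv h ^^ nat (- n))"

definition minimal_homeo :: "('a::topological_space \<Rightarrow> 'a) \<Rightarrow> bool" where
  "minimal_homeo h \<longleftrightarrow> (\<exists>g. homeomorphism UNIV UNIV h g) \<and>
     (\<forall>F. closed F \<and> h ` F = F \<longrightarrow> F = {} \<or> F = UNIV)"

definition inv_measures :: "('a::topological_space \<Rightarrow> 'a) \<Rightarrow> 'a measure set" where
  "inv_measures h = {\<mu>. prob_space \<mu> \<and> sets \<mu> = sets borel \<and>
       (\<forall>A \<in> sets borel. emeasure \<mu> (h -` A) = emeasure \<mu> A)}"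

definition universally_null :: "('a::topological_space \<Rightarrow> 'a) \<Rightarrow> 'a set \<Rightarrow> bool" where
  "universally_null h A \<longleftrightarrow> A \<in> sets borel \<and> (\<forall>\<mu> \<in> inv_measures h. emeasure \<mu> A = 0)"

definition precedes :: "('a::topological_space \<Rightarrow> 'a) \<Rightarrow> 'a set \<Rightarrow> 'a set \<Rightarrow> bool" where
  "precedes h F U \<longleftrightarrow> (\<exists>(M::nat) (V::nat \<Rightarrow> 'a set) (d::nat \<Rightarrow> int).
      (\<forall>j\<le>M. open (V j)) \<and> F \<subseteq> (\<Union>j\<le>M. V j) \<and>
      (\<forall>j\<le>M. hpow h (d j) ` V j \<subseteq> U) \<and>
      (\<forall>i\<le>M. \<forall>j\<le>M. i \<noteq> j \<longrightarrow> hpow h (d i) ` V i \<inter> hpow h (d j) ` V j = {}))"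

definition thin :: "('a::topological_space \<Rightarrow> 'a) \<Rightarrow> 'a set \<Rightarrow> bool" where
  "thin h F \<longleftrightarrow> closed F \<and> (\<forall>U. open U \<and> U \<noteq> {} \<longrightarrow> precedes h F U)"

end

theory Submission
  imports Defs
begin

lemma funpow_homeo:
  fixes h g :: "'a::topological_space \<Rightarrow> 'a"
  assumes "homeomorphism UNIV UNIV h g"
  shows "homeomorphism UNIV UNIV (h^^n) (g^^n)"
proof (induction n)
  case 0
  have e1: "h ^^ 0 = (\<lambda>x. x)" "g ^^ 0 = (\<lambda>x. x)" by auto
  show ?case unfolding e1 by (rule homeomorphism_ident)
next
  case (Suc n)
  have e1: "h ^^ Suc n = h \<circ> h ^^ n" by simp
  have e2: "g ^^ Suc n = g ^^ n \<circ> g" by (rule funpow_Suc_right)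
  show ?case unfolding e1 e2 by (rule homeomorphism_compose[OF Suc assms])
qed

lemma inv_homeo:
  assumes "homeomorphism UNIV UNIV h g"
  shows "inv h = g"
  using assms by (intro inv_equality) (auto simp: homeomorphism_def)

lemma hpow_homeo:
  assumes "homeomorphism UNIV UNIV h g"
  shows "\<exists>g'. homeomorphism UNIV UNIV (hpow h n) g'"
proof (cases "0 \<le> n")
  case True
  then show ?thesis using funpow_homeo[OF assms] by (auto simp: hpow_def)
next
  case False
  then show ?thesis using funpow_homeo[OF homeomorphism_symD[OF assms]] inv_homeo[OF assms]
    by (auto simp: hpow_def)
qed

definition preserves :: "'a measure \<Rightarrow> ('a::topological_space \<Rightarrow> 'a) \<Rightarrow> bool" where
  "preserves \<mu> f \<longleftrightarrow> f \<in> borel_measurable borel \<and>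
     (\<forall>A \<in> sets borel. emeasure \<mu> (f -` A) = emeasure \<mu> A)"

lemma preserves_comp:
  assumes "preserves \<mu> f" "preserves \<mu> g"
  shows "preserves \<mu> (f \<circ> g)"
proof -
  have "f \<circ> g \<in> borel_measurable borel"
    using assms measurable_comp by (auto simp: preserves_def)
  moreover have "emeasure \<mu> ((f \<circ> g) -` A) = emeasure \<mu> A" if "A \<in> sets borel" for A
  proof -
    have "f -` A \<in> sets borel" using assms that measurable_sets[of f borel borel A]
      by (auto simp: preserves_def)
    then have "emeasure \<mu> (g -` (f -` A)) = emeasure \<mu> (f -` A)"
      using assms by (auto simp: preserves_def)
    also have "\<dots> = emeasure \<mu> A" using assms that by (auto simp: preserves_def)
    finally show ?thesis by (simp add: vimage_comp)
  qed
  ultimately show ?thesis by (simp add: preserves_def)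
qed

lemma preserves_id: "preserves \<mu> (\<lambda>x. x)"
  by (simp add: preserves_def)

lemma preserves_funpow:
  assumes "preserves \<mu> f" shows "preserves \<mu> (f^^n)"
proof (induction n)
  case 0 then show ?case using preserves_id by (simp add: id_def)
next
  case (Suc n) then show ?case using preserves_comp[OF assms Suc] by (simp only: funpow.simps(2))
qed

lemma preserves_inverse:
  assumes "preserves \<mu> f" "homeomorphism UNIV UNIV f g"
  shows "preserves \<mu> g"
proof -
  have gm: "g \<in> borel_measurable borel"
    using assms(2) by (intro borel_measurable_continuous_onI) (auto simp: homeomorphism_def)
  moreover have "emeasure \<mu> (g -` A) = emeasure \<mu> A" if "A \<in> sets borel" for A
  proof -
    have "g -` A \<in> sets borel" using gm that measurable_sets[of g borel borel A] by auto
    then have "emeasure \<mu> (f -` (g -` A)) = emeasure \<mu> (g -` A)"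
      using assms by (auto simp: preserves_def)
    moreover have "f -` (g -` A) = A" using assms(2) by (auto simp: homeomorphism_def)
    ultimately show ?thesis by simp
  qed
  ultimately show ?thesis by (simp add: preserves_def)
qed

lemma preserves_hpow:
  assumes "homeomorphism UNIV UNIV h g" "preserves \<mu> h"
  shows "preserves \<mu> (hpow h n)"
proof (cases "0 \<le> n")
  case True
  then show ?thesis using preserves_funpow[OF assms(2)] by (auto simp: hpow_def)
next
  case False
  then show ?thesis using preserves_funpow[OF preserves_inverse[OF assms(2,1)]] inv_homeo[OF assms(1)]
    by (auto simp: hpow_def)
qed

lemma Inter_balls:
  fixes x :: "'a::metric_space"
  shows "(\<Inter>n. ball x (inverse (real (Suc n)))) = {x}"
proof (rule set_eqI, rule iffI)
  fix y assume y: "y \<in> (\<Inter>n. ball x (inverse (real (Suc n))))"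
  have "y = x"
  proof (rule ccontr)
    assume "y \<noteq> x"
    then have "dist x y > 0" by simp
    then obtain n where n: "inverse (real (Suc n)) < dist x y" using reals_Archimedean by blast
    from y have "y \<in> ball x (inverse (real (Suc n)))" by (rule INT_D) (rule UNIV_I)
    then have "dist x y < inverse (real (Suc n))" unfolding mem_ball .
    with n show False by linarith
  qed
  then show "y \<in> {x}" by simp
next
  fix y assume "y \<in> {x}"
  then show "y \<in> (\<Inter>n. ball x (inverse (real (Suc n))))" by simp
qed

lemma small_open:
  fixes \<mu> :: "'a::metric_space measure"
  assumes P: "prob_space \<mu>" and sm: "sets \<mu> = sets borel" and inf: "infinite (UNIV :: 'a set)"
    and e: "e > 0"
  shows "\<exists>U. open U \<and> U \<noteq> {} \<and> measure \<mu> U < e"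
proof -
  interpret Q: prob_space \<mu> by (rule P)
    obtain N :: nat where N: "1 / e < real N" using reals_Archimedean2 by blast
    have Npos: "N > 0" using N e
      by (metis divide_pos_pos gr_zeroI less_numeral_extra(1) of_nat_0 order.asym)
    obtain S :: "'a set" where S: "finite S" "card S = N"
      using infinite_arbitrarily_large[OF inf] by blast
    have "\<exists>x\<in>S. measure \<mu> {x} < e"
    proof (rule ccontr)
      assume "\<not> ?thesis"
      then have ge: "\<And>x. x \<in> S \<Longrightarrow> e \<le> measure \<mu> {x}" by force
      have "measure \<mu> S = (\<Sum>x\<in>S. measure \<mu> {x})"
        using S(1) by (intro measure_eq_sum_singleton) (auto simp: sm)
      also have "\<dots> \<ge> (\<Sum>x\<in>S. e)" using ge by (intro sum_mono) auto
      finally have "real N * e \<le> measure \<mu> S" using S by simp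
      moreover have "1 < real N * e" using N e by (simp add: field_simps)
      ultimately show False using Q.prob_le_1[of S] by linarith
    qed
    then obtain x where x: "measure \<mu> {x} < e" by blast
    define A where "A n = ball x (inverse (real (Suc n)))" for n
    have "decseq A" unfolding A_def
      by (intro decseq_SucI subset_ball) (simp add: field_simps)
    moreover have "range A \<subseteq> sets \<mu>" by (auto simp: A_def sm)
    ultimately have lim: "(\<lambda>n. measure \<mu> (A n)) \<longlonglongrightarrow> measure \<mu> (\<Inter>i. A i)"
      by (rule Q.finite_Lim_measure_decseq[rotated])
    have "(\<Inter>i. A i) = {x}" unfolding A_def by (rule Inter_balls)
    then have lim2: "(\<lambda>n. measure \<mu> (A n)) \<longlonglongrightarrow> measure \<mu> {x}"
      using lim by simp
    have "eventually (\<lambda>n. measure \<mu> (A n) < e) sequentially"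
      using order_tendstoD(2)[OF lim2 x] .
    then obtain n where "measure \<mu> (A n) < e" unfolding eventually_sequentially by blast
    then show ?thesis unfolding A_def by (intro exI[of _ "ball x (inverse (real (Suc n)))"]) auto
qed

lemma bound_lemma:
  fixes \<mu> :: "'a::metric_space measure" and h g :: "'a \<Rightarrow> 'a"
  assumes P: "prob_space \<mu>" and sm: "sets \<mu> = sets borel" and ph: "preserves \<mu> h"
    and hg: "homeomorphism UNIV UNIV h g" and prec: "precedes h F U" and U1: "open U"
  shows "measure \<mu> F \<le> measure \<mu> U"
proof -
  interpret Q: prob_space \<mu> by (rule P)
  from prec obtain M :: nat and V :: "nat \<Rightarrow> 'a set" and d :: "nat \<Rightarrow> int" where
    H: "(\<forall>j\<le>M. open (V j)) \<and> F \<subseteq> (\<Union>j\<le>M. V j) \<and>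
      (\<forall>j\<le>M. hpow h (d j) ` V j \<subseteq> U) \<and>
      (\<forall>i\<le>M. \<forall>j\<le>M. i \<noteq> j \<longrightarrow> hpow h (d i) ` V i \<inter> hpow h (d j) ` V j = {})"
    unfolding precedes_def by (elim exE) (erule that)
  note Vo = H[THEN conjunct1]
  note cov = H[THEN conjunct2, THEN conjunct1]
  note WU = H[THEN conjunct2, THEN conjunct2, THEN conjunct1]
  note disj = H[THEN conjunct2, THEN conjunct2, THEN conjunct2]
  define W where "W j = hpow h (d j) ` V j" for j
  have Wo: "open (W j)" and eqm: "measure \<mu> (V j) = measure \<mu> (W j)" if j: "j \<le> M" for j
  proof -
    obtain g' where hg': "homeomorphism UNIV UNIV (hpow h (d j)) g'"
      using hpow_homeo[OF hg, of "d j"] by (elim exE)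
    have inv1: "\<And>x. g' (hpow h (d j) x) = x" and inv2: "\<And>y. hpow h (d j) (g' y) = y"
      using hg' unfolding homeomorphism_def by auto
    have WW: "W j = g' -` V j"
    proof
      show "W j \<subseteq> g' -` V j" unfolding W_def using inv1 by auto
      show "g' -` V j \<subseteq> W j"
      proof
        fix y assume y: "y \<in> g' -` V j"
        have "y = hpow h (d j) (g' y)" by (simp add: inv2)
        moreover have "g' y \<in> V j" using y by simp
        ultimately show "y \<in> W j" unfolding W_def by (rule image_eqI)
      qed
    qed
    have cg': "continuous_on UNIV g'" using hg' unfolding homeomorphism_def by auto
    show "open (W j)" unfolding WW using cg' Vo j
      by (intro open_vimage) auto
    have pre: "hpow h (d j) -` W j = V j"
    proof
      show "hpow h (d j) -` W j \<subseteq> V j"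
      proof
        fix x assume "x \<in> hpow h (d j) -` W j"
        then obtain v where v: "v \<in> V j" "hpow h (d j) x = hpow h (d j) v" unfolding W_def by auto
        then have "g' (hpow h (d j) x) = g' (hpow h (d j) v)" by simp
        then have "x = v" by (simp add: inv1)
        then show "x \<in> V j" using v(1) by simp
      qed
      show "V j \<subseteq> hpow h (d j) -` W j" unfolding W_def by auto
    qed
    have "emeasure \<mu> (hpow h (d j) -` W j) = emeasure \<mu> (W j)"
      using preserves_hpow[OF hg ph, of "d j"] \<open>open (W j)\<close> by (auto simp: preserves_def)
    then show "measure \<mu> (V j) = measure \<mu> (W j)" by (simp add: pre measure_def)
  qed
  have Vs: "V j \<in> sets \<mu>" if "j \<le> M" for j using Vo that by (simp add: sm)
  have Ws: "W j \<in> sets \<mu>" if "j \<le> M" for j using Wo[OF that] by (simp add: sm)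
  have UVs: "(\<Union>j\<le>M. V j) \<in> sets \<mu>" by (rule sets.finite_UN) (auto intro: Vs)
  have Us: "U \<in> sets \<mu>" using U1 by (simp add: sm)
  have pw: "pairwise (\<lambda>i j. disjnt (W i) (W j)) {..M}"
    unfolding pairwise_def disjnt_def W_def using disj by simp
  have WsubU: "(\<Union>j\<le>M. W j) \<subseteq> U"
  proof (rule UN_least)
    fix j assume "j \<in> {..M}"
    then show "W j \<subseteq> U" using WU by (simp add: W_def)
  qed
  have "measure \<mu> F \<le> measure \<mu> (\<Union>j\<le>M. V j)"
    by (rule Q.finite_measure_mono[OF cov UVs])
  also have "\<dots> \<le> (\<Sum>j\<le>M. measure \<mu> (V j))"
    by (rule measure_subadditive_finite) (auto intro: Vs Q.emeasure_finite)
  also have "\<dots> = (\<Sum>j\<le>M. measure \<mu> (W j))" by (rule sum.cong) (auto intro: eqm)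
  also have "\<dots> = measure \<mu> (\<Union>j\<le>M. W j)"
    by (rule measure_UNION'[symmetric]) (auto simp: Q.fmeasurable_eq_sets intro: Ws pw)
  also have "\<dots> \<le> measure \<mu> U"
    by (rule Q.finite_measure_mono[OF WsubU Us])
  finally show ?thesis .
qed

theorem lemma3p6:
  fixes h :: "'a::metric_space \<Rightarrow> 'a" and F :: "'a set"
  assumes "compact (UNIV :: 'a set)"
    and "infinite (UNIV :: 'a set)"
    and "minimal_homeo h"
    and "closed F"
    and "thin h F"
  shows "universally_null h F"
proof -
  obtain g where hg: "homeomorphism UNIV UNIV h g"
    using assms(3) unfolding minimal_homeo_def by blast
  have Fb: "F \<in> sets borel" using assms(4) by simp
  have "emeasure \<mu> F = 0" if mu: "\<mu> \<in> inv_measures h" for \<mu>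
  proof -
    have P: "prob_space \<mu>" and sm: "sets \<mu> = sets borel"
      and inv: "\<forall>A \<in> sets borel. emeasure \<mu> (h -` A) = emeasure \<mu> A"
      using mu unfolding inv_measures_def by auto
    have ch: "continuous_on UNIV h" using hg unfolding homeomorphism_def by blast
    have ph: "preserves \<mu> h"
      unfolding preserves_def using borel_measurable_continuous_onI[OF ch] inv by blast
    have bound: "measure \<mu> F < e" if e: "e > 0" for e :: real
    proof -
      obtain U where U: "open U" "U \<noteq> {}" "measure \<mu> U < e"
        using small_open[OF P sm assms(2) e] by blast
      have "precedes h F U" using assms(5) U(1,2) unfolding thin_def by blast
      then have "measure \<mu> F \<le> measure \<mu> U" by (rule bound_lemma[OF P sm ph hg _ U(1)])
      then show ?thesis using U(3) by linarith
    qed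
    have "measure \<mu> F \<le> 0"
    proof (rule ccontr)
      assume "\<not> ?thesis"
      then have "0 < measure \<mu> F" by simp
      then have "measure \<mu> F < measure \<mu> F" by (rule bound)
      then show False by simp
    qed
    then have "measure \<mu> F = 0" using measure_nonneg[of \<mu> F] by linarith
    interpret Q: prob_space \<mu> by (rule P)
    show ?thesis using \<open>measure \<mu> F = 0\<close> by (simp add: Q.emeasure_eq_measure)
  qed
  then show ?thesis using Fb unfolding universally_null_def by blast
qed

end
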